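(* Let $\mathcal A$ be a finite, union-closed, separating family of sets whose universe $U(\mathcal A)=\bigcup_{A\in\mathcal A}A$ has $m\geq 1$ elements, and suppose $|\mathcal A|\leq 2m$. Then there is an element $x\in U(\mathcal A)$ contained in at least $\tfrac12|\mathcal A|$ member-sets of $\mathcal A$.
   Context: $\mathcal A$ is union-closed if $A\cup B\in\mathcal A$ for all $A,B\in\mathcal A$. $\mathcal A$ is separating if for any two distinct elements $x,y\in U(\mathcal A)$ there is $A\in\mathcal A$ containing exactly one of $x,y$. *)

theory Defs
  imports Main
begin

definition union_closed :: "'a set set \<Rightarrow> bool" where
  "union_closed \<A> \<longleftrightarrow> (\<forall>A\<in>\<A>. \<forall>B\<in>\<A>. A \<union> B \<in> \<A>)"

definition separating :: "'a set set \<Rightarrow> bool" where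
  "separating \<A> \<longleftrightarrow> (\<forall>x\<in>\<Union>\<A>. \<forall>y\<in>\<Union>\<A>. x \<noteq> y \<longrightarrow>
      (\<exists>A\<in>\<A>. (x \<in> A \<and> y \<notin> A) \<or> (y \<in> A \<and> x \<notin> A)))"

end

theory Submission
  imports Defs
begin

lemma uc_Union:
  assumes uc: "union_closed \<A>" and "finite F" "F \<noteq> {}" "F \<subseteq> \<A>"
  shows "\<Union>F \<in> \<A>"
  using assms(2,3,4)
proof (induction F rule: finite_ne_induct)
  case (singleton x) then show ?case by simp
next
  case (insert x F)
  then show ?case using uc unfolding union_closed_def by simp
qed

theorem mainTheorem2:
  fixes \<A> :: "'a set set" and m :: nat
  assumes "finite \<A>" and "union_closed \<A>" and "separating \<A>"
    and "finite (\<Union>\<A>)" and "card (\<Union>\<A>) = m" and "m \<ge> 1"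
    and "card \<A> \<le> 2 * m"
  shows "\<exists>x\<in>\<Union>\<A>. 2 * card {A \<in> \<A>. x \<in> A} \<ge> card \<A>"
proof (cases "\<exists>y\<in>\<Union>\<A>. \<forall>A\<in>\<A>. y \<in> A")
  case True
  then obtain y where y: "y \<in> \<Union>\<A>" "\<forall>A\<in>\<A>. y \<in> A" by blast
  then have "{A \<in> \<A>. y \<in> A} = \<A>" by blast
  then have "2 * card {A \<in> \<A>. y \<in> A} \<ge> card \<A>" by simp
  then show ?thesis using y(1) by blast
next
  case False
  define U where "U = \<Union>\<A>"
  define B where "B y = \<Union>{A\<in>\<A>. y \<notin> A}" for y
  have Bin: "B y \<in> \<A>" if "y \<in> U" for y
  proof -
    from False that obtain A where "A \<in> \<A>" "y \<notin> A" unfolding U_def by blast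
    then show ?thesis unfolding B_def
      by (intro uc_Union[OF assms(2)]) (use assms(1) in auto)
  qed
  have Bnot: "y \<notin> B y" for y unfolding B_def by blast
  have Bsub: "A \<subseteq> B y" if "A \<in> \<A>" "y \<notin> A" for A y
    using that unfolding B_def by blast
  have inj: "inj_on B U"
  proof (rule inj_onI, rule ccontr)
    fix y z assume yz: "y \<in> U" "z \<in> U" "B y = B z" "y \<noteq> z"
    then obtain A where A: "A \<in> \<A>" "(y \<in> A \<and> z \<notin> A) \<or> (z \<in> A \<and> y \<notin> A)"
      using assms(3) unfolding separating_def U_def by blast
    from A(2) show False
    proof (elim disjE)
      assume "y \<in> A \<and> z \<notin> A"
      then have "A \<subseteq> B z" using Bsub A(1) by blast
      then show False using yz(3) Bnot[of y] \<open>y \<in> A \<and> z \<notin> A\<close> by blast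
    next
      assume "z \<in> A \<and> y \<notin> A"
      then have "A \<subseteq> B y" using Bsub A(1) by blast
      then show False using yz(3) Bnot[of z] \<open>z \<in> A \<and> y \<notin> A\<close> by blast
    qed
  qed
  have "U \<noteq> {}" using assms(4,5,6) unfolding U_def by (metis card.empty not_one_le_zero)
  then obtain y0 where "y0 \<in> U" by blast
  then obtain x where x: "x \<in> U" "\<forall>y. y \<in> U \<longrightarrow> card (B x) \<le> card (B y)"
    using ex_has_least_nat[of "\<lambda>y. y \<in> U" y0 "\<lambda>y. card (B y)"] by blast
  have finB: "finite (B y)" if "y \<in> U" for y
    using Bin[OF that] assms(4) unfolding U_def by (meson Union_upper finite_subset)
  have xB: "x \<in> B y" if "y \<in> U" "y \<noteq> x" for y
  proof (rule ccontr)
    assume "x \<notin> B y"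
    then have "B y \<subseteq> B x" using Bsub Bin[OF that(1)] by blast
    moreover have "card (B x) \<le> card (B y)" using x that by blast
    ultimately have "B y = B x" using card_subset_eq finB x(1) by (metis antisym card_mono)
    then show False using inj that x(1) unfolding inj_on_def by blast
  qed
  have Uin: "U \<in> \<A>" unfolding U_def
    using uc_Union[OF assms(2) assms(1)] \<open>U \<noteq> {}\<close> U_def by auto
  have sub: "insert U (B ` (U - {x})) \<subseteq> {A \<in> \<A>. x \<in> A}"
    using Uin x(1) Bin xB by auto
  have notin: "U \<notin> B ` (U - {x})" using Bnot by blast
  have "card (insert U (B ` (U - {x}))) = m"
  proof -
    have "card (B ` (U - {x})) = card (U - {x})"
      by (rule card_image) (use inj in \<open>auto intro: inj_on_subset\<close>)
    also have "\<dots> = m - 1" using x(1) assms(4,5) unfolding U_def by simp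
    finally show ?thesis using notin assms(4,5,6) unfolding U_def
      by (simp add: card_insert_if)
  qed
  moreover have "card (insert U (B ` (U - {x}))) \<le> card {A \<in> \<A>. x \<in> A}"
    by (rule card_mono) (use assms(1) sub in auto)
  ultimately have "2 * card {A \<in> \<A>. x \<in> A} \<ge> card \<A>" using assms(7) by linarith
  then show ?thesis using x(1) unfolding U_def by blast
qed

end
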